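(* Let $p>1$ and let $t$ satisfy $g(p)\le t\le 2p/(p+1)$. Let $\eta(p,t)$ be the probability measure on $\mathbb{R}$ whose moment sequence is $(a_n(p,t))_{n\ge0}$. Then its $S$-transform is \[ S_{\eta(p,t)}(w)=(2+2w)^{1-p}\,\frac{\left(\sqrt{(2-t)^2+4(1-t)w}+t\right)^p}{\sqrt{(2-t)^2+4(1-t)w}+2-t}. \]
   Context: For real $p,r$, $\binom{np+r}{n}\frac{r}{np+r}$ denotes $1$ for $n=0$ and $\frac{r}{n!}\prod_{i=1}^{n-1}(np+r-i)$ for $n\ge1$. Set $a_n(p,t)=t\binom{np+1}{n}\frac{1}{np+1}+2(1-t)\binom{np+2}{n}\frac{1}{np+2}$; equivalently $\sum_{n\ge0}a_n(p,t)z^n=t\mathcal{B}_p(z)+(1-t)\mathcal{B}_p(z)^2$, where $\mathcal{B}_p(z)=\sum_{n\ge0}\binom{np+1}{n}\frac{z^n}{np+1}$ satisfies $\mathcal{B}_p(z)=1+z\mathcal{B}_p(z)^p$. For $p\ge1$, $g(p)=\min\{t\in\mathbb{R}: t\sin((1-1/p)\phi)+2(1-t)\sin\phi\cos(\phi/p)\ge0\ \forall\,0<\phi<\pi\}$; for $p>1$ and $g(p)\le t\le 2p/(p+1)$ the sequence $a_n(p,t)$ is the moment sequence of a unique probability measure $\eta(p,t)$, supported on $[0,p^p(p-1)^{1-p}]$. For a compactly supported probability measure $\mu$ with moment generating function $M_\mu(z)=\sum_{n\ge0}z^n\int x^n\,d\mu(x)$, the $S$-transform $S_\mu$ is defined (near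 $0$) by $M_\mu\!\left(\frac{z}{1+z}S_\mu(z)\right)=1+z$. Square roots are the branches equal to the positive root at $w=0$. *)

theory Defs
  imports "HOL-Probability.Probability"
begin

text \<open>Generalized binomial expression: binom(np+r, n) * r/(np+r), interpreted as
  1 for n = 0 and r/n! * prod_{i=1}^{n-1} (np + r - i) for n >= 1.\<close>
definition gbin :: "real \<Rightarrow> real \<Rightarrow> nat \<Rightarrow> real" where
  "gbin p r n = (if n = 0 then 1
      else r / fact n * (\<Prod>i\<in>{1..<n}. real n * p + r - real i))"

text \<open>a_n(p,t) = t binom(np+1,n)/(np+1) + 2(1-t) binom(np+2,n)/(np+2)
  = t * gbin p 1 n + (1-t) * gbin p 2 n.\<close>
definition a_seq :: "real \<Rightarrow> real \<Rightarrow> nat \<Rightarrow> real" where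
  "a_seq p t n = t * gbin p 1 n + 2 * (1 - t) * (gbin p 2 n / 2)"

definition g_fun :: "real \<Rightarrow> real" where
  "g_fun p = Inf {t. \<forall>\<phi>. 0 < \<phi> \<and> \<phi> < pi \<longrightarrow>
       t * sin ((1 - 1/p) * \<phi>) + 2 * (1 - t) * sin \<phi> * cos (\<phi> / p) \<ge> 0}"

definition moment_gf :: "real measure \<Rightarrow> complex \<Rightarrow> complex" where
  "moment_gf \<mu> z = (\<Sum>n. complex_of_real (\<integral>x. x ^ n \<partial>\<mu>) * z ^ n)"

text \<open>The claimed S-transform (principal branches; near w = 0 these agree with
  the branches positive at w = 0).\<close>
definition S_formula :: "real \<Rightarrow> real \<Rightarrow> complex \<Rightarrow> complex" where
  "S_formula p t w =
     (let R = csqrt (complex_of_real ((2 - t)^2) + 4 * complex_of_real (1 - t) * w)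
      in (2 + 2 * w) powr complex_of_real (1 - p) *
         ((R + complex_of_real t) powr complex_of_real p) / (R + complex_of_real (2 - t)))"

end

theory Submission imports Defs "HOL-Complex_Analysis.Complex_Analysis"
begin
unbundle no vec_syntax
unbundle fps_syntax

lemma lag_key:
  fixes Ph :: "'a::field_char_0 fps"
  assumes P0: "Ph $ 0 = 1" and ik: "i + k = m" and m: "0 < m"
  shows "(fps_deriv ((fps_X * inverse Ph) ^ i) * Ph ^ m) $ (m - 1) = (if i = m then of_nat m else 0)"
proof (cases "i = 0")
  case True
  then show ?thesis using m by simp
next
  case False
  define Ps where "Ps = inverse Ph"
  have PP: "Ps * Ph = 1" unfolding Ps_def using P0 by (simp add: inverse_mult_eq_1)
  define Z where "Z = fps_X * Ps"
  have ZP: "Z ^ i * Ph ^ i = fps_X ^ i"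
  proof -
    have "Z ^ i * Ph ^ i = fps_X ^ i * (Ps * Ph) ^ i" unfolding Z_def by (simp add: power_mult_distrib)
    then show ?thesis by (simp add: PP)
  qed
  have d: "fps_deriv (Z ^ i) * Ph ^ i = fps_const (of_nat i) * fps_X ^ (i - 1) - Z ^ i * fps_deriv (Ph ^ i)"
  proof -
    have "fps_deriv (Z ^ i * Ph ^ i) = fps_deriv (fps_X ^ i :: 'a fps)" by (simp add: ZP)
    then have "fps_deriv (Z ^ i) * Ph ^ i + Z ^ i * fps_deriv (Ph ^ i) = fps_const (of_nat i) * fps_X ^ (i - 1)"
      by (simp add: fps_deriv_power add.commute)
    then show ?thesis by (simp add: eq_diff_eq)
  qed
  have e: "Z ^ i * fps_deriv (Ph ^ i) = fps_const (of_nat i) * fps_X ^ i * (Ps * fps_deriv Ph)"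
  proof -
    obtain j where j: "i = Suc j" using False by (cases i) auto
    have "Z ^ i * fps_deriv (Ph ^ i) = fps_const (of_nat i) * fps_X ^ i * (Ps ^ j * Ph ^ j) * (Ps * fps_deriv Ph)"
      unfolding Z_def j fps_deriv_power by (simp add: power_mult_distrib mult_ac)
    also have "Ps ^ j * Ph ^ j = 1" by (simp flip: power_mult_distrib add: PP)
    finally show ?thesis by simp
  qed
  have "fps_deriv (Z ^ i) * Ph ^ m = (fps_deriv (Z ^ i) * Ph ^ i) * Ph ^ k"
    unfolding ik[symmetric] by (simp add: power_add mult.assoc)
  also have "\<dots> = fps_const (of_nat i) * fps_X ^ (i - 1) * Ph ^ k
      - fps_const (of_nat i) * fps_X ^ i * (Ps * fps_deriv Ph * Ph ^ k)"
    unfolding d e by (simp add: left_diff_distrib mult.assoc)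
  finally have eq: "fps_deriv (Z ^ i) * Ph ^ m = \<dots>" .
  have c1: "(fps_const (of_nat i) * fps_X ^ (i - 1) * Ph ^ k) $ (m - 1) = of_nat i * (Ph ^ k) $ k"
    using False unfolding ik[symmetric] by (simp add: fps_X_power_mult_nth mult.assoc)
  have "(fps_deriv (Z ^ i) * Ph ^ m) $ (m - 1) = (if i = m then of_nat m else 0)"
  proof (cases "k = 0")
    case True
    then have "i = m" using ik by simp
    have "(fps_const (of_nat i) * fps_X ^ i * (Ps * fps_deriv Ph * Ph ^ k)) $ (m - 1) = 0"
      using m \<open>i = m\<close> by (simp add: fps_X_power_mult_nth mult.assoc)
    then show ?thesis using eq c1 True \<open>i = m\<close> by simp
  next
    case False2: False
    obtain l where l: "k = Suc l" using False2 by (cases k) auto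
    have "Ps * fps_deriv Ph * Ph ^ k = fps_deriv Ph * Ph ^ l * (Ps * Ph)"
      using l by (simp add: algebra_simps)
    also have "\<dots> = fps_deriv Ph * Ph ^ l" by (simp add: PP)
    finally have q: "Ps * fps_deriv Ph * Ph ^ k = fps_deriv Ph * Ph ^ l" .
    have dk: "fps_deriv (Ph ^ k) = fps_const (of_nat k) * (fps_deriv Ph * Ph ^ l)"
      unfolding l fps_deriv_power diff_Suc_1 by (simp only: mult_ac)
    have h1: "(fps_deriv (Ph ^ k)) $ l = of_nat k * (fps_deriv Ph * Ph ^ l) $ l"
      by (simp only: dk fps_mult_left_const_nth)
    have h2: "(fps_deriv (Ph ^ k)) $ l = of_nat k * (Ph ^ k) $ k" by (simp only: l fps_deriv_nth Suc_eq_plus1)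
    have "k \<noteq> 0" using l by simp
    with h1 h2 have r: "(fps_deriv Ph * Ph ^ l) $ l = (Ph ^ k) $ k" by simp
    have c2: "(fps_const (of_nat i) * fps_X ^ i * (fps_deriv Ph * Ph ^ l)) $ (m - 1) = of_nat i * (Ph ^ k) $ k"
      using l False r unfolding ik[symmetric] by (simp add: fps_X_power_mult_nth mult.assoc)
    show ?thesis using eq c1 c2 q ik False2 by simp
  qed
  then show ?thesis by (simp add: Z_def Ps_def)
qed

definition lagc :: "'a::field_char_0 fps \<Rightarrow> 'a fps \<Rightarrow> nat \<Rightarrow> 'a" where
  "lagc H Ph n = (if n = 0 then H $ 0 else (fps_deriv H * Ph ^ n) $ (n - 1) / of_nat n)"

lemma Zpow_nth_low:
  fixes Ph :: "'a::field_char_0 fps"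
  assumes "m < i" shows "((fps_X * inverse Ph) ^ i) $ m = 0"
  by (simp only: power_mult_distrib fps_X_power_mult_nth if_P[OF assms])

lemma lagrange_nth:
  fixes Ph H :: "'a::field_char_0 fps"
  assumes P0: "Ph $ 0 = 1"
  shows "H $ N = (\<Sum>i=0..N. lagc H Ph i * ((fps_X * inverse Ph) ^ i) $ N)"
proof (induction N rule: less_induct)
  case (less N)
  define Z where "Z = fps_X * inverse Ph"
  define c where "c = lagc H Ph"
  define E where "E = H - (\<Sum>i=0..N. fps_const (c i) * Z ^ i)"
  have Enth: "E $ m = H $ m - (\<Sum>i=0..N. c i * (Z ^ i) $ m)" for m
    unfolding E_def by (simp only: fps_sub_nth fps_sum_nth fps_mult_left_const_nth)
  have Elow: "E $ m = 0" if "m < N" for m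
  proof -
    have "(\<Sum>i=0..N. c i * (Z ^ i) $ m) = (\<Sum>i=0..m. c i * (Z ^ i) $ m)"
    proof (rule sum.mono_neutral_right)
      show "\<forall>i\<in>{0..N} - {0..m}. c i * (Z ^ i) $ m = 0"
      proof
        fix i assume "i \<in> {0..N} - {0..m}"
        then have "m < i" by auto
        then show "c i * (Z ^ i) $ m = 0" unfolding Z_def by (simp only: Zpow_nth_low mult_zero_right)
      qed
      show "{0..m} \<subseteq> {0..N}" using that by auto
    qed simp
    moreover have "H $ m = (\<Sum>i=0..m. c i * (Z ^ i) $ m)"
      unfolding Z_def c_def by (rule less.IH[OF that])
    ultimately show ?thesis unfolding Enth by simp
  qed
  have "E $ N = 0"
  proof (cases "N = 0")
    case True
    have "E $ 0 = H $ 0 - c 0 * (Z ^ 0) $ 0" unfolding Enth True by simp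
    also have "\<dots> = 0" by (simp add: c_def lagc_def)
    finally show ?thesis using True by simp
  next
    case False
    have "(fps_deriv E * Ph ^ N) $ (N - 1) = (\<Sum>j=0..N-1. fps_deriv E $ j * (Ph ^ N) $ (N - 1 - j))"
      by (rule fps_mult_nth)
    also have "\<dots> = (\<Sum>j\<in>{N-1}. fps_deriv E $ j * (Ph ^ N) $ (N - 1 - j))"
    proof (rule sum.mono_neutral_right)
      show "\<forall>j\<in>{0..N-1} - {N-1}. fps_deriv E $ j * (Ph ^ N) $ (N - 1 - j) = 0"
      proof
        fix j assume "j \<in> {0..N-1} - {N-1}"
        then have "j + 1 < N" by auto
        then have "E $ (j + 1) = 0" by (rule Elow)
        then show "fps_deriv E $ j * (Ph ^ N) $ (N - 1 - j) = 0" by (simp only: fps_deriv_nth mult_zero_right mult_zero_left)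
      qed
    qed auto
    also have "\<dots> = fps_deriv E $ (N - 1) * (Ph ^ N) $ 0" by simp
    also have "(Ph ^ N) $ 0 = 1" using P0 by (rule fps_power_zeroth_eq_one)
    also have "fps_deriv E $ (N - 1) = of_nat N * E $ N"
      using False by (simp only: fps_deriv_nth) simp
    finally have A: "(fps_deriv E * Ph ^ N) $ (N - 1) = of_nat N * E $ N" by simp
    have dE: "fps_deriv E = fps_deriv H - (\<Sum>i=0..N. fps_const (c i) * fps_deriv (Z ^ i))"
      unfolding E_def by (simp only: fps_deriv_sub fps_deriv_sum fps_deriv_mult_const_left)
    have "fps_deriv E * Ph ^ N = fps_deriv H * Ph ^ N - (\<Sum>i=0..N. fps_const (c i) * (fps_deriv (Z ^ i) * Ph ^ N))"
      by (simp only: dE left_diff_distrib sum_distrib_right mult.assoc)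
    then have "(fps_deriv E * Ph ^ N) $ (N - 1) = (fps_deriv H * Ph ^ N) $ (N - 1)
        - (\<Sum>i=0..N. c i * (fps_deriv (Z ^ i) * Ph ^ N) $ (N - 1))"
      by (simp only: fps_sub_nth fps_sum_nth fps_mult_left_const_nth)
    also have "(\<Sum>i=0..N. c i * (fps_deriv (Z ^ i) * Ph ^ N) $ (N - 1))
        = (\<Sum>i=0..N. c i * (if i = N then of_nat N else 0))"
    proof (rule sum.cong)
      fix i assume "i \<in> {0..N}"
      then have "i + (N - i) = N" by simp
      from lag_key[OF P0 this] False show "c i * (fps_deriv (Z ^ i) * Ph ^ N) $ (N - 1) = c i * (if i = N then of_nat N else 0)"
        unfolding Z_def by (simp only: neq0_conv)
    qed (rule refl)
    also have "\<dots> = c N * of_nat N"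
    proof -
      have "(\<Sum>i=0..N. c i * (if i = N then of_nat N else 0)) = (\<Sum>i\<in>{N}. c i * (if i = N then of_nat N else 0))"
        by (rule sum.mono_neutral_right) auto
      then show ?thesis by simp
    qed
    also have "c N * of_nat N = (fps_deriv H * Ph ^ N) $ (N - 1)"
      using False by (simp add: c_def lagc_def)
    finally have "(fps_deriv E * Ph ^ N) $ (N - 1) = 0" by simp
    with A False show ?thesis by simp
  qed
  then show ?case unfolding Enth Z_def c_def by simp
qed

lemma lagrange:
  fixes Ph H :: "'a::field_char_0 fps"
  assumes P0: "Ph $ 0 = 1"
  shows "fps_compose (Abs_fps (lagc H Ph)) (fps_X * inverse Ph) = H"
  by (rule fps_ext) (simp only: fps_compose_nth fps_nth_Abs_fps lagrange_nth[OF P0, symmetric])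

lemma fps_deriv_binomial': "fps_deriv (fps_binomial c) = fps_const c * fps_binomial (c - 1)"
  by (rule fps_ext) (simp only: fps_deriv_nth fps_binomial_nth fps_mult_left_const_nth Suc_eq_plus1[symmetric] gbinomial_absorption)

lemma lagc_binomial:
  fixes p r :: complex
  shows "lagc (fps_binomial r) (fps_binomial p) (Suc m) = r * ((r - 1 + of_nat (Suc m) * p) gchoose m) / of_nat (Suc m)"
proof -
  have "fps_deriv (fps_binomial r) * fps_binomial p ^ Suc m = fps_const r * fps_binomial (r - 1 + of_nat (Suc m) * p)"
    by (simp only: fps_deriv_binomial' fps_binomial_power fps_binomial_add_mult mult.assoc)
  then show ?thesis by (simp only: lagc_def Suc_not_Zero if_False diff_Suc_1 fps_mult_left_const_nth fps_binomial_nth)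
qed


lemma gbin_Suc: "gbin p r (Suc m) = r * ((r - 1 + real (Suc m) * p) gchoose m) / real (Suc m)"
proof -
  have "(\<Prod>i\<in>{1..<Suc m}. real (Suc m) * p + r - real i) = (\<Prod>i\<in>{0..<m}. (r - 1 + real (Suc m) * p) - real i)"
  proof -
    have e: "(\<Prod>i\<in>{Suc 0..<Suc m}. real (Suc m) * p + r - real i) = (\<Prod>i\<in>{0..<m}. real (Suc m) * p + r - real (Suc i))"
      by (rule prod.shift_bounds_Suc_ivl)
    also have "\<dots> = (\<Prod>i\<in>{0..<m}. (r - 1 + real (Suc m) * p) - real i)"
      by (rule prod.cong) (auto simp: algebra_simps)
    finally show ?thesis by (simp add: One_nat_def)
  qed
  then show ?thesis
    by (simp add: gbin_def gbinomial_prod_rev del: of_nat_Suc)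
qed

lemma of_real_gchoose: "(of_real (a gchoose k) :: complex) = (of_real a) gchoose k"
  by (simp add: gbinomial_prod_rev of_real_prod)

lemma prod_bound_nat: "\<Prod>{Suc n..2*n} \<le> 4^n * fact n"
proof -
  have a: "fact (2*n) = (fact n :: nat) * \<Prod>{Suc n..2*n}" by (rule fact_eq_fact_times) simp
  have b: "fact n * fact n * (2*n choose n) = (fact (2*n) :: nat)" using binomial_fact_lemma[of n "2*n"] by simp
  have "fact n * \<Prod>{Suc n..2*n} = fact n * (fact n * (2*n choose n))" using a b by (simp add: mult_ac)
  then have c: "\<Prod>{Suc n..2*n} = fact n * (2*n choose n)" by simp
  have "2*n choose n \<le> 2^(2*n)" by (rule binomial_le_pow2)
  also have "(2::nat)^(2*n) = 4^n" by (simp add: power_mult)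
  finally show ?thesis using c by (simp add: mult.commute)
qed

lemma prod_shift_real: "(\<Prod>i\<in>{1..n}. real (n + i)) = real (\<Prod>{Suc n..2*n})"
proof -
  have "(\<Prod>i\<in>{1..n}. real (n + i)) = (\<Prod>i\<in>{1..n}. (\<lambda>j. real j) (i + n))" by (simp add: add.commute)
  also have "\<dots> = (\<Prod>j\<in>{1+n..n+n}. real j)" by (rule prod.shift_bounds_cl_nat_ivl[symmetric])
  also have "{1+n..n+n} = {Suc n..2*n}" by auto
  finally show ?thesis by (simp add: of_nat_prod)
qed

lemma gbin_bound:
  assumes p: "p \<ge> 0"
  shows "\<bar>gbin p r n\<bar> \<le> (1 + \<bar>r\<bar>) * (4 * (p + \<bar>r\<bar> + 1)) ^ n"
proof (cases "n = 0")
  case True then show ?thesis by (simp add: gbin_def)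
next
  case False
  define L where "L = p + \<bar>r\<bar> + 1"
  have L1: "L \<ge> 1" using p by (simp add: L_def)
  have n1: "real n \<ge> 1" using False by simp
  have each: "\<bar>real n * p + r - real i\<bar> \<le> L * real (n + i)" for i
  proof -
    have h: "0 \<le> real n * p" using p by simp
    have h1: "real n * p + r - real i \<le> real n * p + \<bar>r\<bar> + real i" using abs_ge_self[of r] by simp
    have h2: "-(real n * p + r - real i) \<le> real n * p + \<bar>r\<bar> + real i" using h abs_ge_minus_self[of r] by (simp add: mult.commute)
    have "\<bar>real n * p + r - real i\<bar> \<le> real n * p + \<bar>r\<bar> + real i" using h1 h2 by (simp only: abs_le_iff)
    also have "\<dots> \<le> L * real (n + i)"
    proof -
      have "\<bar>r\<bar> \<le> \<bar>r\<bar> * real n" using n1 by (simp add: mult_le_cancel_left1)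
      moreover have "real i \<le> L * real i" using L1 by (simp add: mult_le_cancel_right1)
      moreover have "L * real (n + i) = real n * p + \<bar>r\<bar> * real n + real n + L * real i" by (simp add: L_def algebra_simps)
      ultimately show ?thesis by simp
    qed
    finally show ?thesis .
  qed
  have "\<bar>\<Prod>i\<in>{1..<n}. real n * p + r - real i\<bar> = (\<Prod>i\<in>{1..<n}. \<bar>real n * p + r - real i\<bar>)"
    by (simp add: abs_prod)
  also have "\<dots> \<le> (\<Prod>i\<in>{1..<n}. L * real (n + i))"
    by (rule prod_mono) (use each in \<open>simp del: of_nat_add\<close>)
  also have "\<dots> = L ^ (n - 1) * (\<Prod>i\<in>{1..<n}. real (n + i))"
    by (simp add: prod.distrib)
  also have "\<dots> \<le> L ^ n * (\<Prod>i\<in>{1..n}. real (n + i))"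
  proof (rule mult_mono)
    show "L ^ (n - 1) \<le> L ^ n" using L1 by (simp add: power_increasing)
    have "(\<Prod>i\<in>{1..n}. real (n + i)) = (\<Prod>i\<in>{1..<n}. real (n + i)) * real (n + n)"
    proof -
      have "{1..n} = insert n {1..<n}" using False by auto
      then show ?thesis by (simp add: mult.commute)
    qed
    moreover have "(\<Prod>i\<in>{1..<n}. real (n + i)) \<ge> 0" by (rule prod_nonneg) simp
    ultimately show "(\<Prod>i\<in>{1..<n}. real (n + i)) \<le> (\<Prod>i\<in>{1..n}. real (n + i))"
      using n1 by (simp add: mult_le_cancel_left1)
  qed (use L1 in \<open>auto intro: prod_nonneg\<close>)
  also have "\<dots> \<le> L ^ n * (4 ^ n * fact n)"
  proof -
    have "real (\<Prod>{Suc n..2*n}) \<le> real (4^n * fact n)" using prod_bound_nat of_nat_le_iff by blast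
    then show ?thesis unfolding prod_shift_real using L1 by (intro mult_left_mono) simp_all
  qed
  finally have P: "\<bar>\<Prod>i\<in>{1..<n}. real n * p + r - real i\<bar> \<le> L ^ n * (4 ^ n * fact n)" .
  have "\<bar>gbin p r n\<bar> = \<bar>r\<bar> / fact n * \<bar>\<Prod>i\<in>{1..<n}. real n * p + r - real i\<bar>"
    using False by (simp add: gbin_def abs_mult)
  also have "\<dots> \<le> \<bar>r\<bar> / fact n * (L ^ n * (4 ^ n * fact n))"
    by (intro mult_left_mono P) simp
  also have "\<dots> = \<bar>r\<bar> * (4 * L) ^ n" by (simp add: power_mult_distrib)
  also have "\<dots> \<le> (1 + \<bar>r\<bar>) * (4 * L) ^ n" using L1 by (intro mult_right_mono) simp_all
  finally show ?thesis by (simp add: L_def)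
qed


lemma lagc_gbin:
  "lagc (fps_binomial (of_real r)) (fps_binomial (of_real p)) n = complex_of_real (gbin p r n)"
proof (cases n)
  case 0 then show ?thesis by (simp add: lagc_def gbin_def)
next
  case (Suc m)
  have "complex_of_real (gbin p r (Suc m)) = of_real r * of_real ((r - 1 + real (Suc m) * p) gchoose m) / of_nat (Suc m)"
    by (simp only: gbin_Suc of_real_mult of_real_divide of_real_of_nat_eq)
  also have "of_real ((r - 1 + real (Suc m) * p) gchoose m) = ((of_real r - 1 + of_nat (Suc m) * of_real p :: complex) gchoose m)"
  proof -
    have e: "(of_real (r - 1 + real (Suc m) * p) :: complex) = of_real r - 1 + of_nat (Suc m) * of_real p"
      by (simp only: of_real_add of_real_diff of_real_mult of_real_1 of_real_of_nat_eq)
    show ?thesis by (simp only: of_real_gchoose e)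
  qed
  also have "of_real r * ((of_real r - 1 + of_nat (Suc m) * of_real p :: complex) gchoose m) / of_nat (Suc m)
     = lagc (fps_binomial (of_real r)) (fps_binomial (of_real p)) (Suc m)"
    by (rule lagc_binomial[symmetric])
  finally show ?thesis unfolding Suc by (rule sym)
qed

lemma inverse_fps_binomial: "inverse (fps_binomial (c::complex)) = fps_binomial (-c)"
proof -
  have 1: "fps_binomial c * fps_binomial (-c) = 1"
    using fps_binomial_add_mult[of c "-c"] by simp
  have 2: "inverse (fps_binomial c) * fps_binomial c = 1"
    by (rule inverse_mult_eq_1) simp
  have "inverse (fps_binomial c) = inverse (fps_binomial c) * (fps_binomial c * fps_binomial (-c))"
    by (simp only: 1 mult_1_right)
  also have "\<dots> = (inverse (fps_binomial c) * fps_binomial c) * fps_binomial (-c)"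
    by (simp only: mult.assoc)
  also have "\<dots> = fps_binomial (-c)" by (simp only: 2 mult_1_left)
  finally show ?thesis .
qed

definition Afps :: "real \<Rightarrow> real \<Rightarrow> complex fps" where
  "Afps p r = Abs_fps (\<lambda>n. complex_of_real (gbin p r n))"

lemma compose_Afps:
  "fps_compose (Afps p r) (fps_X * fps_binomial (- of_real p)) = fps_binomial (of_real r)"
proof -
  have 1: "Afps p r = Abs_fps (lagc (fps_binomial (of_real r)) (fps_binomial (of_real p)))"
    unfolding Afps_def by (rule arg_cong[where f=Abs_fps]) (simp only: fun_eq_iff lagc_gbin, rule allI, rule refl)
  have 2: "fps_X * fps_binomial (- of_real p) = fps_X * inverse (fps_binomial (complex_of_real p))"
    by (simp only: inverse_fps_binomial)
  have 3: "fps_binomial (complex_of_real p) $ 0 = 1" by (simp only: fps_binomial_nth gbinomial_0)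
  show ?thesis unfolding 1 2 by (rule lagrange[OF 3])
qed

lemma radius_Afps:
  assumes p: "p \<ge> 0"
  shows "fps_conv_radius (Afps p r) > 0"
proof -
  define K where "K = 4 * (p + \<bar>r\<bar> + 1)"
  have K: "K > 0" using p by (simp add: K_def)
  define z0 where "z0 = complex_of_real (1 / (2 * K))"
  have "summable (\<lambda>n. fps_nth (Afps p r) n * z0 ^ n)"
  proof (rule summable_comparison_test)
    show "\<exists>N. \<forall>n\<ge>N. norm (fps_nth (Afps p r) n * z0 ^ n) \<le> (1 + \<bar>r\<bar>) * (1/2) ^ n"
    proof (intro exI allI impI)
      fix n :: nat
      have "norm (fps_nth (Afps p r) n * z0 ^ n) = \<bar>gbin p r n\<bar> * (1 / (2 * K)) ^ n"
        unfolding Afps_def z0_def fps_nth_Abs_fps norm_mult norm_power norm_of_real using K by simp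
      also have "\<dots> \<le> (1 + \<bar>r\<bar>) * K ^ n * (1 / (2 * K)) ^ n"
      proof -
        have "0 \<le> (1 / (2 * K)) ^ n" using K by simp
        then show ?thesis using gbin_bound[OF p, of r n] unfolding K_def[symmetric] by (intro mult_right_mono)
      qed
      also have "\<dots> = (1 + \<bar>r\<bar>) * (1/2) ^ n"
      proof -
        have "K * (1 / (2 * K)) = 1/2" using K by simp
        then show ?thesis by (simp only: mult.assoc power_mult_distrib[symmetric])
      qed
      finally show "norm (fps_nth (Afps p r) n * z0 ^ n) \<le> (1 + \<bar>r\<bar>) * (1/2) ^ n" .
    qed
    show "summable (\<lambda>n. (1 + \<bar>r\<bar>) * (1/2::real) ^ n)"
      by (intro summable_mult summable_geometric) simp
  qed
  then have "conv_radius (fps_nth (Afps p r)) \<ge> norm z0" by (rule conv_radius_geI)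
  moreover have "norm z0 > 0" using K by (simp add: z0_def)
  ultimately show ?thesis unfolding fps_conv_radius_def
    by (meson ereal_less(2) less_le_trans zero_ereal_def)
qed

definition zf :: "real \<Rightarrow> complex \<Rightarrow> complex" where
  "zf p u = u * (1 + u) powr (- complex_of_real p)"

lemma zf_expansion: "zf p has_fps_expansion fps_X * fps_binomial (- complex_of_real p)"
proof -
  have "(\<lambda>u. u * (1 + u) powr (- complex_of_real p)) has_fps_expansion fps_X * fps_binomial (- complex_of_real p)"
    by (rule has_fps_expansion_mult[OF has_fps_expansion_fps_X has_fps_expansion_binomial_complex])
  then show ?thesis by (simp add: zf_def[abs_def])
qed

lemma zf_tendsto: "filterlim (zf p) (nhds 0) (nhds 0)"
proof -
  have c: "isCont (zf p) 0" using has_fps_expansion_imp_continuous[OF zf_expansion[of p], of UNIV] by simp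
  have "zf p 0 = 0" by (simp add: zf_def)
  with isCont_tendsto_compose[OF c filterlim_ident[of "nhds 0"]] show ?thesis by simp
qed

lemma Afps_compose_eventually:
  assumes p: "p \<ge> 0"
  shows "eventually (\<lambda>u. eval_fps (Afps p (real k)) (zf p u) = (1 + u) ^ k) (nhds 0)"
proof -
  have F: "eval_fps (Afps p (real k)) has_fps_expansion Afps p (real k)"
    by (rule eval_fps_has_fps_expansion) (rule radius_Afps[OF p])
  have G0: "fps_nth (fps_X * fps_binomial (- complex_of_real p)) 0 = 0" by simp
  have "(eval_fps (Afps p (real k)) \<circ> zf p) has_fps_expansion fps_binomial (complex_of_real (real k))"
    using has_fps_expansion_compose[OF F zf_expansion G0] by (simp only: compose_Afps)
  also have "fps_binomial (complex_of_real (real k)) = (1 + fps_X) ^ k"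
    by (simp add: fps_binomial_of_nat[symmetric])
  finally have A: "(eval_fps (Afps p (real k)) \<circ> zf p) has_fps_expansion (1 + fps_X) ^ k" .
  have B: "(\<lambda>u::complex. (1 + u) ^ k) has_fps_expansion (1 + fps_X) ^ k"
    by (rule has_fps_expansion_power[OF has_fps_expansion_add[OF has_fps_expansion_1 has_fps_expansion_fps_X]])
  note e1 = conjunct2[OF A[unfolded has_fps_expansion_def]]
  note e2 = conjunct2[OF B[unfolded has_fps_expansion_def]]
  from e1 e2 show ?thesis by eventually_elim (metis comp_apply)
qed

lemma a_seq_split: "a_seq p t n = t * gbin p 1 n + (1 - t) * gbin p 2 n"
  by (simp add: a_seq_def)

lemma moment_sums:
  assumes p: "p \<ge> 0"
  shows "eventually (\<lambda>z. (\<lambda>n. complex_of_real (a_seq p t n) * z ^ n) sums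
           (of_real t * eval_fps (Afps p 1) z + of_real (1 - t) * eval_fps (Afps p 2) z)) (nhds 0)"
proof -
  have e: "eventually (\<lambda>z. ereal (norm z) < fps_conv_radius (Afps p r)) (nhds 0)" for r
  proof -
    have "eventually (\<lambda>z. z \<in> eball 0 (fps_conv_radius (Afps p r))) (nhds 0)"
      using radius_Afps[OF p, of r] by (intro eventually_nhds_in_open) (auto simp: zero_ereal_def)
    then show ?thesis by eventually_elim (simp add: dist_norm)
  qed
  show ?thesis
    using e[of 1] e[of 2]
  proof eventually_elim
    case (elim z)
    have 1: "(\<lambda>n. fps_nth (Afps p 1) n * z ^ n) sums eval_fps (Afps p 1) z" by (rule sums_eval_fps) fact
    have 2: "(\<lambda>n. fps_nth (Afps p 2) n * z ^ n) sums eval_fps (Afps p 2) z" by (rule sums_eval_fps) fact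
    have "(\<lambda>n. of_real t * (fps_nth (Afps p 1) n * z ^ n) + of_real (1 - t) * (fps_nth (Afps p 2) n * z ^ n)) sums
           (of_real t * eval_fps (Afps p 1) z + of_real (1 - t) * eval_fps (Afps p 2) z)"
      by (intro sums_add sums_mult 1 2)
    moreover have "(\<lambda>n. of_real t * (fps_nth (Afps p 1) n * z ^ n) + of_real (1 - t) * (fps_nth (Afps p 2) n * z ^ n))
        = (\<lambda>n. complex_of_real (a_seq p t n) * z ^ n)"
      by (rule ext) (simp only: a_seq_split of_real_add of_real_mult distrib_right mult.assoc Afps_def fps_nth_Abs_fps)
    ultimately show ?case by metis
  qed
qed


lemma Ln_div_pos:
  fixes a b :: complex
  assumes a: "Re a > 0" and b: "Re b > 0"
  shows "Ln (a / b) = Ln a - Ln b"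
proof -
  have a0: "a \<noteq> 0" and b0: "b \<noteq> 0" using a b by auto
  have ia: "\<bar>Im (Ln a)\<bar> < pi/2" by (rule Re_Ln_pos_lt_imp[OF a])
  have ib: "\<bar>Im (Ln b)\<bar> < pi/2" by (rule Re_Ln_pos_lt_imp[OF b])
  have e: "exp (Ln a - Ln b) = a / b" using a0 b0 by (simp add: exp_diff)
  have "-pi < Im (Ln a - Ln b)" "Im (Ln a - Ln b) \<le> pi" using ia ib by (auto simp: abs_less_iff)
  then have "Ln (exp (Ln a - Ln b)) = Ln a - Ln b" by (rule Ln_exp)
  then show ?thesis by (simp only: e)
qed

lemma aux1:
  fixes a q x y w :: complex
  assumes "a \<noteq> 0"
  shows "w / a * (2 * a * x * y / q) = 2 * w / q * (x * y)"
proof (cases "q = 0")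
  case True then show ?thesis by simp
next
  case False with assms show ?thesis by (simp add: field_simps)
qed

lemma re_pos_nz: "Re (z::complex) > 0 \<Longrightarrow> z \<noteq> 0" by auto

lemma key_alg:
  fixes t p :: real and w R :: complex
  assumes R2: "R^2 = complex_of_real ((2-t)^2) + 4 * complex_of_real (1-t) * w"
    and D: "Re (R + complex_of_real t) > 0" and Q: "Re (R + complex_of_real (2-t)) > 0" and W: "Re (1+w) > 0"
  shows "w / (1+w) * ((2 + 2*w) powr complex_of_real (1-p) * ((R + complex_of_real t) powr complex_of_real p)
            / (R + complex_of_real (2-t))) = zf p (2*(1+w)/(R + complex_of_real t) - 1)"
    and "complex_of_real t * (1 + (2*(1+w)/(R+complex_of_real t) - 1)) + complex_of_real (1-t) * (1 + (2*(1+w)/(R+complex_of_real t) - 1))^2 = 1 + w"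
proof -
  define T where "T = complex_of_real t"
  define P where "P = complex_of_real p"
  have R2': "R^2 = (2 - T)^2 + 4 * (1 - T) * w" using R2 by (simp add: T_def)
  have W2: "Re (2 * (1 + w)) > 0" using W by simp
  have D': "Re (R + T) > 0" using D by (simp add: T_def)
  have Q': "Re (R + (2 - T)) > 0" using Q by (simp add: T_def)
  have D0: "R + T \<noteq> 0" by (rule re_pos_nz[OF D'])
  have Q0: "R + (2 - T) \<noteq> 0" by (rule re_pos_nz[OF Q'])
  have W0: "1 + w \<noteq> 0" by (rule re_pos_nz[OF W])
  define L1 where "L1 = Ln (2 * (1 + w))"
  define L2 where "L2 = Ln (R + T)"
  have W20: "2 * (1 + w) \<noteq> 0" by (metis W0 mult_eq_0_iff zero_neq_numeral)
  have eL1: "exp L1 = 2 * (1 + w)" unfolding L1_def by (rule exp_Ln[OF W20])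
  have ids: "(2 * (1 + w) - (R + T)) * (R + (2 - T)) - 2 * w * (R + T) = (2 - T)^2 + 4 * (1 - T) * w - R^2"
    by (simp add: power2_eq_square algebra_simps)
  then have id1: "(2 * (1 + w) - (R + T)) * (R + (2 - T)) = 2 * w * (R + T)" using R2' by simp
  have ids2: "T * 2 * (R + T) + 4 * (1 - T) * (1 + w) - (R + T)^2 = (2 - T)^2 + 4 * (1 - T) * w - R^2"
    by (simp add: power2_eq_square algebra_simps)
  then have id2: "T * 2 * (R + T) + 4 * (1 - T) * (1 + w) = (R + T)^2" using R2' by simp
  have p1: "(2 + 2*w) powr (1 - P) = 2 * (1 + w) * exp (- P * L1)"
  proof -
    have e22: "2 + 2*w = 2*(1+w)" by simp
    have "(2 + 2*w) powr (1 - P) = exp ((1 - P) * L1)" unfolding e22 L1_def by (simp only: powr_def if_not_P[OF W20])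
    also have "\<dots> = exp L1 * exp (- P * L1)" by (simp add: exp_add[symmetric] algebra_simps)
    finally show ?thesis by (simp only: eL1)
  qed
  have p2: "(R + T) powr P = exp (P * L2)" unfolding L2_def by (simp only: powr_def if_not_P[OF D0])
  have p3: "(2 * (1 + w) / (R + T)) powr (- P) = exp (- P * L1) * exp (P * L2)"
  proof -
    have nz: "2 * (1 + w) / (R + T) \<noteq> 0" by (metis W20 D0 divide_eq_0_iff)
    have "(2 * (1 + w) / (R + T)) powr (- P) = exp (- P * Ln (2 * (1 + w) / (R + T)))" by (simp only: powr_def if_not_P[OF nz])
    also have "Ln (2 * (1 + w) / (R + T)) = L1 - L2" unfolding L1_def L2_def by (rule Ln_div_pos[OF W2 D'])
    finally show ?thesis by (simp add: exp_add[symmetric] algebra_simps)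
  qed
  have "w / (1+w) * ((2 + 2*w) powr (1 - P) * ((R + T) powr P) / (R + (2 - T)))
      = (2 * w / (R + (2 - T))) * (exp (- P * L1) * exp (P * L2))"
    unfolding p1 p2 by (rule aux1[OF W0])
  also have "2 * w / (R + (2 - T)) = 2 * (1 + w) / (R + T) - 1"
  proof -
    have "2 * w / (R + (2 - T)) = (2 * (1 + w) - (R + T)) / (R + T)"
      by (subst frac_eq_eq[OF Q0 D0]) (rule id1[symmetric])
    also have "\<dots> = 2 * (1 + w) / (R + T) - 1" using D0 by (simp add: diff_divide_distrib)
    finally show ?thesis .
  qed
  also have "exp (- P * L1) * exp (P * L2) = (1 + (2 * (1 + w) / (R + T) - 1)) powr (- P)"
  proof -
    have e: "1 + (2 * (1 + w) / (R + T) - 1) = 2 * (1 + w) / (R + T)" by (rule add_diff_cancel_left'[THEN subst, of "\<lambda>x. x = _"], simp)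
    show ?thesis by (simp only: e p3)
  qed
  finally show "w / (1+w) * ((2 + 2*w) powr complex_of_real (1-p) * ((R + complex_of_real t) powr complex_of_real p)
            / (R + complex_of_real (2-t))) = zf p (2*(1+w)/(R + complex_of_real t) - 1)"
    by (simp add: zf_def T_def P_def)
  define B where "B = 2 * (1 + w) / (R + T)"
  have hB: "B * (R + T) = 2 * (1 + w)" using D0 by (simp add: B_def)
  have "(T * B + (1 - T) * B^2) * (R + T)^2 = T * (B * (R + T)) * (R + T) + (1 - T) * (B * (R + T))^2"
    by (simp add: algebra_simps power2_eq_square)
  also have "\<dots> = T * (2 * (1 + w)) * (R + T) + (1 - T) * (2 * (1 + w))^2" by (simp only: hB)
  also have "\<dots> = (1 + w) * (T * 2 * (R + T) + 4 * (1 - T) * (1 + w))" by (simp add: algebra_simps power2_eq_square)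
  also have "\<dots> = (1 + w) * (R + T)^2" by (simp only: id2)
  finally have "(T * B + (1 - T) * B^2) * (R + T)^2 = (1 + w) * (R + T)^2" .
  moreover have "(R + T)^2 \<noteq> 0" using D0 by simp
  ultimately have "T * B + (1 - T) * B^2 = 1 + w" by (rule mult_right_cancel[THEN iffD1, rotated])
  then show "complex_of_real t * (1 + (2*(1+w)/(R+complex_of_real t) - 1)) + complex_of_real (1-t) * (1 + (2*(1+w)/(R+complex_of_real t) - 1))^2 = 1 + w"
    by (simp add: T_def B_def)
qed


lemma main_eventually:
  fixes p t :: real
  assumes p1: "p > 1" and tle: "t \<le> 2 * p / (p + 1)"
  shows "eventually (\<lambda>w. (\<lambda>n. complex_of_real (a_seq p t n) * (w / (1 + w) * S_formula p t w) ^ n) sums (1 + w)) (nhds 0)"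
proof -
  have p0: "p \<ge> 0" using p1 by simp
  have t2: "t < 2"
  proof -
    have "2 * p / (p + 1) < 2" using p1 by (simp add: field_simps)
    then show ?thesis using tle by simp
  qed
  define T where "T = complex_of_real t"
  define a where "a = complex_of_real ((2 - t)^2)"
  define b where "b = 4 * complex_of_real (1 - t)"
  define R where "R = (\<lambda>w::complex. csqrt (a + b * w))"
  define U where "U = (\<lambda>w. 2 * (1 + w) / (R w + T) - 1)"
  have a_pos: "a \<notin> \<real>\<^sub>\<le>\<^sub>0" using t2 by (simp add: a_def complex_nonpos_Reals_iff)
  have R0: "R 0 = complex_of_real (2 - t)"
  proof -
    have "R 0 = csqrt (complex_of_real ((2 - t)^2))" by (simp add: R_def a_def)
    also have "\<dots> = complex_of_real (sqrt ((2 - t)^2))" by (rule csqrt_of_real) simp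
    also have "sqrt ((2 - t)^2) = 2 - t" using t2 by simp
    finally show ?thesis .
  qed
  have Rcont: "isCont R 0"
  proof -
    have c2: "isCont csqrt ((\<lambda>w. a + b * w) 0)" using a_pos by (simp add: continuous_at_csqrt)
    have c1: "isCont (\<lambda>w. a + b * w) 0" by (intro continuous_intros)
    show ?thesis unfolding R_def by (rule isCont_o2[OF c1 c2])
  qed
  have Rlim: "(R \<longlongrightarrow> R 0) (nhds 0)" by (rule isCont_tendsto_compose[OF Rcont filterlim_ident])
  have ev1: "eventually (\<lambda>w. Re (R w + T) > 0) (nhds 0)"
  proof -
    have "((\<lambda>w. Re (R w + T)) \<longlongrightarrow> Re (R 0 + T)) (nhds 0)" by (intro tendsto_intros Rlim)
    moreover have "Re (R 0 + T) = 2" by (simp add: R0 T_def)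
    ultimately have "((\<lambda>w. Re (R w + T)) \<longlongrightarrow> 2) (nhds 0)" by simp
    then show ?thesis by (rule order_tendstoD(1)) simp
  qed
  have ev2: "eventually (\<lambda>w. Re (R w + complex_of_real (2 - t)) > 0) (nhds 0)"
  proof -
    have "((\<lambda>w. Re (R w + complex_of_real (2 - t))) \<longlongrightarrow> Re (R 0 + complex_of_real (2 - t))) (nhds 0)" by (intro tendsto_intros Rlim)
    moreover have "Re (R 0 + complex_of_real (2 - t)) = 4 - 2 * t" by (simp add: R0)
    ultimately have "((\<lambda>w. Re (R w + complex_of_real (2 - t))) \<longlongrightarrow> 4 - 2 * t) (nhds 0)" by metis
    then show ?thesis by (rule order_tendstoD(1)) (use t2 in simp)
  qed
  have ev3: "eventually (\<lambda>w::complex. Re (1 + w) > 0) (nhds 0)"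
  proof -
    have "((\<lambda>w::complex. Re (1 + w)) \<longlongrightarrow> Re (1 + 0)) (nhds 0)" by (intro tendsto_intros filterlim_ident)
    then have "((\<lambda>w::complex. Re (1 + w)) \<longlongrightarrow> 1) (nhds 0)" by simp
    then show ?thesis by (rule order_tendstoD(1)) simp
  qed
  have Ulim: "filterlim U (nhds 0) (nhds 0)"
  proof -
    have "(U \<longlongrightarrow> 2 * (1 + 0) / (R 0 + T) - 1) (nhds 0)"
      unfolding U_def by (intro tendsto_intros Rlim filterlim_ident) (simp add: R0 T_def)
    moreover have "2 * (1 + 0) / (R 0 + T) - 1 = 0" by (simp add: R0 T_def)
    ultimately show ?thesis by simp
  qed
  define Q where "Q = (\<lambda>u. (\<lambda>n. complex_of_real (a_seq p t n) * zf p u ^ n) sums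
           (complex_of_real t * (1 + u) + complex_of_real (1 - t) * (1 + u) ^ 2))"
  have evQ: "eventually Q (nhds 0)"
  proof -
    have m: "eventually (\<lambda>u. (\<lambda>n. complex_of_real (a_seq p t n) * zf p u ^ n) sums
           (of_real t * eval_fps (Afps p 1) (zf p u) + of_real (1 - t) * eval_fps (Afps p 2) (zf p u))) (nhds 0)"
      by (rule eventually_compose_filterlim[OF moment_sums[OF p0] zf_tendsto])
    have k1: "eventually (\<lambda>u. eval_fps (Afps p 1) (zf p u) = (1 + u) ^ 1) (nhds 0)"
      using Afps_compose_eventually[OF p0, of 1] by simp
    have k2: "eventually (\<lambda>u. eval_fps (Afps p 2) (zf p u) = (1 + u) ^ 2) (nhds 0)"
      using Afps_compose_eventually[OF p0, of 2] by simp
    from m k1 k2 show ?thesis unfolding Q_def by eventually_elim simp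
  qed
  have evQU: "eventually (\<lambda>w. Q (U w)) (nhds 0)"
    by (rule eventually_compose_filterlim[OF evQ Ulim])
  from evQU ev1 ev2 ev3 show ?thesis
  proof eventually_elim
    case (elim w)
    have R2: "(R w)^2 = complex_of_real ((2-t)^2) + 4 * complex_of_real (1-t) * w"
      by (simp add: R_def a_def b_def)
    have D: "Re (R w + complex_of_real t) > 0" using elim(2) by (simp add: T_def)
    note ka = key_alg[OF R2 D elim(3) elim(4)]
    have Sf: "S_formula p t w = (2 + 2*w) powr complex_of_real (1-p) * ((R w + complex_of_real t) powr complex_of_real p)
            / (R w + complex_of_real (2-t))"
      by (simp add: S_formula_def R_def a_def b_def Let_def)
    have z: "w / (1 + w) * S_formula p t w = zf p (U w)"
      unfolding Sf U_def T_def by (rule ka(1))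
    have v: "complex_of_real t * (1 + U w) + complex_of_real (1 - t) * (1 + U w) ^ 2 = 1 + w"
      unfolding U_def T_def by (rule ka(2))
    from elim(1) show ?case unfolding Q_def z v .
  qed
qed


theorem mainTheorem4:
  fixes p t :: real and \<eta> :: "real measure"
  assumes "p > 1"
    and "g_fun p \<le> t" and "t \<le> 2 * p / (p + 1)"
    and "prob_space \<eta>" and "sets \<eta> = sets borel"
    and "\<And>n. integrable \<eta> (\<lambda>x. x ^ n)"
    and "\<And>n. (\<integral>x. x ^ n \<partial>\<eta>) = a_seq p t n"
  shows "\<exists>r > 0. \<forall>w \<in> ball 0 r.
           summable (\<lambda>n. complex_of_real (\<integral>x. x ^ n \<partial>\<eta>) * (w / (1 + w) * S_formula p t w) ^ n) \<and>
           moment_gf \<eta> (w / (1 + w) * S_formula p t w) = 1 + w"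
proof -
  have ev: "eventually (\<lambda>w. (\<lambda>n. complex_of_real (a_seq p t n) * (w / (1 + w) * S_formula p t w) ^ n) sums (1 + w)) (nhds 0)"
    by (rule main_eventually[OF assms(1) assms(3)])
  then obtain d where d: "d > 0"
    "\<And>w. dist w 0 < d \<Longrightarrow> (\<lambda>n. complex_of_real (a_seq p t n) * (w / (1 + w) * S_formula p t w) ^ n) sums (1 + w)"
    unfolding eventually_nhds_metric by blast
  show ?thesis
  proof (intro exI[of _ d] conjI ballI d(1))
    fix w :: complex assume "w \<in> ball 0 d"
    then have "dist w 0 < d" by (simp add: dist_commute)
    then have S: "(\<lambda>n. complex_of_real (a_seq p t n) * (w / (1 + w) * S_formula p t w) ^ n) sums (1 + w)" by (rule d(2))
    have eq: "(\<lambda>n. complex_of_real (\<integral>x. x ^ n \<partial>\<eta>) * (w / (1 + w) * S_formula p t w) ^ n)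
        = (\<lambda>n. complex_of_real (a_seq p t n) * (w / (1 + w) * S_formula p t w) ^ n)"
      using assms(7) by simp
    show "summable (\<lambda>n. complex_of_real (\<integral>x. x ^ n \<partial>\<eta>) * (w / (1 + w) * S_formula p t w) ^ n)"
      unfolding eq using S by (rule sums_summable)
    show "moment_gf \<eta> (w / (1 + w) * S_formula p t w) = 1 + w"
      unfolding moment_gf_def eq using S by (rule sums_unique[symmetric])
  qed
qed

end
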